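(* Let $\tilde{\mathfrak{g}}$ be a real solvable Lie algebra with an Einstein metric $\langle,\rangle$, $\widetilde{\operatorname{Ric}}=\lambda\,\mathrm{id}$ with $\lambda\neq0$, admitting a pseudo-Iwasawa decomposition $\tilde{\mathfrak g}=\mathfrak{g}\oplus^\perp\mathfrak{a}$. Then $\mathfrak{g}$ is the nilradical of $\tilde{\mathfrak{g}}$.
   Context: A metric on a Lie algebra is a nondegenerate symmetric bilinear form, possibly indefinite; the Ricci operator is that of the corresponding left-invariant pseudo-Riemannian metric on the simply connected Lie group. A pseudo-Iwasawa decomposition of a metric Lie algebra $\tilde{\mathfrak g}$ is an orthogonal direct sum of vector spaces $\tilde{\mathfrak{g}}=\mathfrak{g}\oplus^\perp\mathfrak{a}$ with $\mathfrak{g}$ a nilpotent ideal, $\mathfrak{a}$ an abelian subalgebra, and $\operatorname{ad}X$ self-adjoint with respect to the metric for every $X\in\mathfrak a$. *)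

theory Defs
  imports "HOL-Analysis.Analysis"
begin

text \<open>Finite-dimensional real Lie algebras are modelled on a type of class euclidean_space
(the built-in inner product of that type plays no role except to compute traces);
the bracket is an explicit operation br.\<close>

definition lie_algebra :: "('a::real_vector \<Rightarrow> 'a \<Rightarrow> 'a) \<Rightarrow> bool" where
  "lie_algebra br \<longleftrightarrow> bilinear br \<and> (\<forall>x. br x x = 0) \<and>
     (\<forall>x y z. br x (br y z) + br y (br z x) + br z (br x y) = 0)"

definition lie_subalgebra :: "('a::real_vector \<Rightarrow> 'a \<Rightarrow> 'a) \<Rightarrow> 'a set \<Rightarrow> bool" where
  "lie_subalgebra br S \<longleftrightarrow> subspace S \<and> (\<forall>x\<in>S. \<forall>y\<in>S. br x y \<in> S)"

definition lie_ideal :: "('a::real_vector \<Rightarrow> 'a \<Rightarrow> 'a) \<Rightarrow> 'a set \<Rightarrow> bool" where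
  "lie_ideal br S \<longleftrightarrow> subspace S \<and> (\<forall>x y. y \<in> S \<longrightarrow> br x y \<in> S)"

definition abelian_set :: "('a::real_vector \<Rightarrow> 'a \<Rightarrow> 'a) \<Rightarrow> 'a set \<Rightarrow> bool" where
  "abelian_set br S \<longleftrightarrow> (\<forall>x\<in>S. \<forall>y\<in>S. br x y = 0)"

fun lower_central :: "('a::real_vector \<Rightarrow> 'a \<Rightarrow> 'a) \<Rightarrow> 'a set \<Rightarrow> nat \<Rightarrow> 'a set" where
  "lower_central br S 0 = S"
| "lower_central br S (Suc k) = span {br x y | x y. x \<in> S \<and> y \<in> lower_central br S k}"

definition nilpotent_set :: "('a::real_vector \<Rightarrow> 'a \<Rightarrow> 'a) \<Rightarrow> 'a set \<Rightarrow> bool" where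
  "nilpotent_set br S \<longleftrightarrow> (\<exists>k. lower_central br S k = {0})"

fun derived_series :: "('a::real_vector \<Rightarrow> 'a \<Rightarrow> 'a) \<Rightarrow> 'a set \<Rightarrow> nat \<Rightarrow> 'a set" where
  "derived_series br S 0 = S"
| "derived_series br S (Suc k) =
     span {br x y | x y. x \<in> derived_series br S k \<and> y \<in> derived_series br S k}"

definition solvable_lie :: "('a::real_vector \<Rightarrow> 'a \<Rightarrow> 'a) \<Rightarrow> bool" where
  "solvable_lie br \<longleftrightarrow> (\<exists>k. derived_series br UNIV k = {0})"

definition nilpotent_ideal :: "('a::real_vector \<Rightarrow> 'a \<Rightarrow> 'a) \<Rightarrow> 'a set \<Rightarrow> bool" where
  "nilpotent_ideal br S \<longleftrightarrow> lie_ideal br S \<and> nilpotent_set br S"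

definition is_nilradical :: "('a::real_vector \<Rightarrow> 'a \<Rightarrow> 'a) \<Rightarrow> 'a set \<Rightarrow> bool" where
  "is_nilradical br N \<longleftrightarrow> nilpotent_ideal br N \<and> (\<forall>I. nilpotent_ideal br I \<longrightarrow> I \<subseteq> N)"

text \<open>Metric: nondegenerate symmetric bilinear form, possibly indefinite.\<close>
definition metric :: "('a::real_vector \<Rightarrow> 'a \<Rightarrow> real) \<Rightarrow> bool" where
  "metric g \<longleftrightarrow> bilinear g \<and> (\<forall>x y. g x y = g y x) \<and> (\<forall>x. (\<forall>y. g x y = 0) \<longrightarrow> x = 0)"

text \<open>Levi-Civita connection on left-invariant fields (Koszul formula).\<close>
definition levi_civita :: "('a::real_vector \<Rightarrow> 'a \<Rightarrow> real) \<Rightarrow> ('a \<Rightarrow> 'a \<Rightarrow> 'a) \<Rightarrow> 'a \<Rightarrow> 'a \<Rightarrow> 'a" where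
  "levi_civita g br X Y = (THE W. \<forall>Z. 2 * g W Z = g (br X Y) Z - g (br Y Z) X + g (br Z X) Y)"

definition curvature :: "('a::real_vector \<Rightarrow> 'a \<Rightarrow> real) \<Rightarrow> ('a \<Rightarrow> 'a \<Rightarrow> 'a) \<Rightarrow> 'a \<Rightarrow> 'a \<Rightarrow> 'a \<Rightarrow> 'a" where
  "curvature g br X Y Z =
     levi_civita g br X (levi_civita g br Y Z) - levi_civita g br Y (levi_civita g br X Z)
     - levi_civita g br (br X Y) Z"

definition ricci_tensor :: "('a::euclidean_space \<Rightarrow> 'a \<Rightarrow> real) \<Rightarrow> ('a \<Rightarrow> 'a \<Rightarrow> 'a) \<Rightarrow> 'a \<Rightarrow> 'a \<Rightarrow> real" where
  "ricci_tensor g br Y Z = (\<Sum>b\<in>Basis. curvature g br b Y Z \<bullet> b)"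

definition ricci_operator :: "('a::euclidean_space \<Rightarrow> 'a \<Rightarrow> real) \<Rightarrow> ('a \<Rightarrow> 'a \<Rightarrow> 'a) \<Rightarrow> 'a \<Rightarrow> 'a" where
  "ricci_operator g br Y = (THE W. \<forall>Z. g W Z = ricci_tensor g br Y Z)"

definition pseudo_iwasawa ::
  "('a::real_vector \<Rightarrow> 'a \<Rightarrow> real) \<Rightarrow> ('a \<Rightarrow> 'a \<Rightarrow> 'a) \<Rightarrow> 'a set \<Rightarrow> 'a set \<Rightarrow> bool" where
  "pseudo_iwasawa g br n a \<longleftrightarrow>
     nilpotent_ideal br n \<and> lie_subalgebra br a \<and> abelian_set br a \<and>
     n \<inter> a = {0} \<and> n + a = UNIV \<and>
     (\<forall>x\<in>n. \<forall>y\<in>a. g x y = 0) \<and>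
     (\<forall>X\<in>a. \<forall>Y Z. g (br X Y) Z = g Y (br X Z))"

end

theory Submission
  imports Defs
begin

definition onb :: "'a::euclidean_space set \<Rightarrow> 'a set \<Rightarrow> bool" where
  "onb B S \<longleftrightarrow> finite B \<and> B \<subseteq> S \<and> (\<forall>b\<in>B. b \<bullet> b = 1) \<and>
     (\<forall>b\<in>B. \<forall>c\<in>B. b \<noteq> c \<longrightarrow> b \<bullet> c = 0) \<and> span B = S"

lemma onb_exists:
  fixes S :: "'a::euclidean_space set"
  assumes "subspace S" shows "\<exists>B. onb B S"
proof -
  obtain B where B: "B \<subseteq> S" "pairwise orthogonal B" "\<And>x. x \<in> B \<Longrightarrow> norm x = 1"
    "independent B" "span B = S"
    using orthonormal_basis_subspace[OF assms] by metis
  have "finite B" using B(4) independent_imp_finite by blast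
  moreover have "\<forall>b\<in>B. b \<bullet> b = 1" using B(3) by (metis power2_norm_eq_inner one_power2)
  moreover have "\<forall>b\<in>B. \<forall>c\<in>B. b \<noteq> c \<longrightarrow> b \<bullet> c = 0" using B(2)
    by (auto simp: pairwise_def orthogonal_def)
  ultimately show ?thesis using B unfolding onb_def by blast
qed

lemma onb_coeff:
  fixes B :: "'a::euclidean_space set"
  assumes "onb B S" "c \<in> B"
  shows "(\<Sum>v\<in>B. u v *\<^sub>R v) \<bullet> c = u c"
proof -
  have fin: "finite B" using assms unfolding onb_def by auto
  have "(\<Sum>v\<in>B. u v *\<^sub>R v) \<bullet> c = (\<Sum>v\<in>B. u v * (v \<bullet> c))"
    by (simp add: inner_sum_left)
  also have "\<dots> = (\<Sum>v\<in>B. if v = c then u c else 0)"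
    using assms unfolding onb_def by (intro sum.cong) auto
  also have "\<dots> = u c" using fin assms(2) by simp
  finally show ?thesis .
qed

lemma onb_expand:
  fixes B :: "'a::euclidean_space set"
  assumes "onb B S" "x \<in> S"
  shows "x = (\<Sum>b\<in>B. (x \<bullet> b) *\<^sub>R b)"
proof -
  have fin: "finite B" and sp: "span B = S" using assms unfolding onb_def by auto
  obtain u where u: "x = (\<Sum>v\<in>B. u v *\<^sub>R v)"
    using assms(2) sp span_finite[OF fin] by auto
  have "\<And>b. b \<in> B \<Longrightarrow> x \<bullet> b = u b" using onb_coeff[OF assms(1)] u by simp
  then show ?thesis using u by (metis (no_types, lifting) sum.cong)
qed

lemma onb_Basis: "onb (Basis::'a::euclidean_space set) UNIV"
  unfolding onb_def by (auto simp: inner_Basis)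

lemma onb_indep:
  fixes T :: "'a::euclidean_space \<Rightarrow> 'a"
  assumes B: "onb B S" and D: "onb D S" and T: "linear T" "T ` S \<subseteq> S"
  shows "(\<Sum>b\<in>B. T b \<bullet> b) = (\<Sum>d\<in>D. T d \<bullet> d)"
proof -
  have finB: "finite B" "B \<subseteq> S" and finD: "finite D" "D \<subseteq> S" using B D unfolding onb_def by auto
  have "(\<Sum>b\<in>B. T b \<bullet> b) = (\<Sum>b\<in>B. \<Sum>d\<in>D. (T b \<bullet> d) * (d \<bullet> b))"
  proof (rule sum.cong[OF refl])
    fix b assume "b \<in> B"
    then have "T b \<in> S" using finB T by auto
    then have "T b = (\<Sum>d\<in>D. (T b \<bullet> d) *\<^sub>R d)" using onb_expand[OF D] by blast
    then have "T b \<bullet> b = (\<Sum>d\<in>D. (T b \<bullet> d) *\<^sub>R d) \<bullet> b" by simp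
    then show "T b \<bullet> b = (\<Sum>d\<in>D. (T b \<bullet> d) * (d \<bullet> b))" by (simp add: inner_sum_left)
  qed
  also have "\<dots> = (\<Sum>d\<in>D. \<Sum>b\<in>B. (T b \<bullet> d) * (d \<bullet> b))" by (rule sum.swap)
  also have "\<dots> = (\<Sum>d\<in>D. T d \<bullet> d)"
  proof (rule sum.cong[OF refl])
    fix d assume "d \<in> D"
    then have "d \<in> S" using finD by auto
    then have e: "d = (\<Sum>b\<in>B. (d \<bullet> b) *\<^sub>R b)" using onb_expand[OF B] by blast
    have "T d = (\<Sum>b\<in>B. (d \<bullet> b) *\<^sub>R T b)"
      by (subst e) (simp add: linear_sum[OF T(1)] linear_scale[OF T(1)])
    then show "(\<Sum>b\<in>B. (T b \<bullet> d) * (d \<bullet> b)) = T d \<bullet> d"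
      by (simp add: inner_sum_left mult.commute)
  qed
  finally show ?thesis .
qed

lemma onb_restrict:
  fixes T :: "'a::euclidean_space \<Rightarrow> 'a"
  assumes S: "subspace S" "subspace S'" "S' \<subseteq> S" and T: "linear T" "T ` S \<subseteq> S'"
    and B: "onb B S" and B': "onb B' S'"
  shows "(\<Sum>b\<in>B. T b \<bullet> b) = (\<Sum>b\<in>B'. T b \<bullet> b)"
proof -
  define R where "R = S \<inter> {y. \<forall>s\<in>S'. s \<bullet> y = 0}"
  have "subspace {y. \<forall>s\<in>S'. s \<bullet> y = 0}"
    using subspace_orthogonal_to_vectors[of S'] by (simp add: orthogonal_def)
  then have sR: "subspace R" unfolding R_def using S(1) subspace_inter by blast
  obtain C where C: "onb C R" using onb_exists[OF sR] by blast
  have B'p: "finite B'" "B' \<subseteq> S'" "\<forall>b\<in>B'. b \<bullet> b = 1" "\<forall>b\<in>B'. \<forall>c\<in>B'. b \<noteq> c \<longrightarrow> b \<bullet> c = 0"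
    "span B' = S'" using B' unfolding onb_def by auto
  have Cp: "finite C" "C \<subseteq> R" "\<forall>b\<in>C. b \<bullet> b = 1" "\<forall>b\<in>C. \<forall>c\<in>C. b \<noteq> c \<longrightarrow> b \<bullet> c = 0"
    "span C = R" using C unfolding onb_def by auto
  have orth: "\<And>b c. b \<in> B' \<Longrightarrow> c \<in> C \<Longrightarrow> b \<bullet> c = 0"
    using B'p(2) Cp(2) unfolding R_def by auto
  have disj: "B' \<inter> C = {}"
  proof (rule ccontr)
    assume "B' \<inter> C \<noteq> {}" then obtain b where "b \<in> B'" "b \<in> C" by auto
    then show False using orth[of b b] B'p(3) by auto
  qed
  have spanU: "span (B' \<union> C) = S"
  proof
    show "span (B' \<union> C) \<subseteq> S"
      using B'p(2) Cp(2) S unfolding R_def by (intro span_minimal) auto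
  next
    show "S \<subseteq> span (B' \<union> C)"
    proof
      fix x assume x: "x \<in> S"
      define p where "p = (\<Sum>b\<in>B'. (x \<bullet> b) *\<^sub>R b)"
      have pB: "p \<in> span (B' \<union> C)" unfolding p_def
        by (intro span_sum span_scale span_base) auto
      have pS': "p \<in> S'" unfolding p_def using B'p(5)
        by (metis (no_types, lifting) span_base span_scale span_sum)
      have "\<And>c. c \<in> B' \<Longrightarrow> c \<bullet> (x - p) = 0"
      proof -
        fix c assume c: "c \<in> B'"
        have "p \<bullet> c = x \<bullet> c" unfolding p_def using onb_coeff[OF B' c] by simp
        then show "c \<bullet> (x - p) = 0" by (simp add: inner_diff_right inner_commute)
      qed
      then have "\<forall>s\<in>S'. s \<bullet> (x - p) = 0"
        using orthogonal_to_span[of _ B' "x - p"] B'p(5)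
        by (metis orthogonal_commute orthogonal_def)
      moreover have "x - p \<in> S" using x pS' S by (meson subset_iff subspace_diff)
      ultimately have "x - p \<in> R" unfolding R_def by auto
      then have "x - p \<in> span (B' \<union> C)" using Cp(5) span_mono[of C "B' \<union> C"] by auto
      then have "(x - p) + p \<in> span (B' \<union> C)" using pB span_add by blast
      then show "x \<in> span (B' \<union> C)" by simp
    qed
  qed
  have U: "onb (B' \<union> C) S"
    unfolding onb_def using B'p(1,3,4) Cp(1,3,4) spanU orth
    by (auto simp: span_base) (metis inner_commute)
  have TS: "T ` S \<subseteq> S" using T S by auto
  have "(\<Sum>b\<in>B. T b \<bullet> b) = (\<Sum>b\<in>B' \<union> C. T b \<bullet> b)" by (rule onb_indep[OF B U T(1) TS])
  also have "\<dots> = (\<Sum>b\<in>B'. T b \<bullet> b) + (\<Sum>b\<in>C. T b \<bullet> b)"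
    using B'p(1) Cp(1) disj by (rule sum.union_disjoint)
  also have "(\<Sum>b\<in>C. T b \<bullet> b) = 0"
  proof (rule sum.neutral, rule ballI)
    fix c assume "c \<in> C"
    then have "c \<in> S" "\<forall>s\<in>S'. s \<bullet> c = 0" using Cp(2) unfolding R_def by auto
    then show "T c \<bullet> c = 0" using T(2) by auto
  qed
  finally show ?thesis by simp
qed

lemma trace_flag:
  fixes T :: "'a::euclidean_space \<Rightarrow> 'a" and F :: "nat \<Rightarrow> 'a set"
  assumes T: "linear T" and sub: "\<And>j. subspace (F j)" and dec: "\<And>j. F (Suc j) \<subseteq> F j"
    and F0: "F 0 = UNIV" and Fk: "F k = {0}" and TF: "\<And>j. T ` F j \<subseteq> F (Suc j)"
  shows "(\<Sum>b\<in>Basis. T b \<bullet> b) = 0"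
proof -
  have P: "\<forall>B. onb B (F j) \<longrightarrow> (\<Sum>b\<in>B. T b \<bullet> b) = (\<Sum>b\<in>Basis. T b \<bullet> b)" for j
  proof (induction j)
    case 0
    show ?case using onb_indep[OF _ onb_Basis T] F0 by auto
  next
    case (Suc j)
    show ?case
    proof (intro allI impI)
      fix B' assume B': "onb B' (F (Suc j))"
      obtain B where B: "onb B (F j)" using onb_exists[OF sub] by blast
      have "(\<Sum>b\<in>B. T b \<bullet> b) = (\<Sum>b\<in>B'. T b \<bullet> b)"
        by (rule onb_restrict[OF sub sub dec T TF B B'])
      then show "(\<Sum>b\<in>B'. T b \<bullet> b) = (\<Sum>b\<in>Basis. T b \<bullet> b)" using Suc B by auto
    qed
  qed
  have "onb {} (F k)" using Fk unfolding onb_def by auto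
  then show ?thesis using P[of k] by auto
qed


lemma la_bil: "lie_algebra br \<Longrightarrow> bilinear br" by (simp add: lie_algebra_def)

lemma la_anti:
  assumes "lie_algebra br" shows "br y x = - br x y"
proof -
  have b: "bilinear br" using assms by (simp add: lie_algebra_def)
  have "br (x+y) (x+y) = 0" "br x x = 0" "br y y = 0" using assms by (auto simp: lie_algebra_def)
  then have "br y x + br x y = 0"
    by (simp add: bilinear_ladd[OF b] bilinear_radd[OF b])
  then show ?thesis by (simp add: eq_neg_iff_add_eq_0)
qed

lemma la_jacobi:
  "lie_algebra br \<Longrightarrow> br x (br y z) + br y (br z x) + br z (br x y) = 0"
  by (simp add: lie_algebra_def)

lemma lc_subspace:
  assumes "lie_ideal br J" shows "subspace (lower_central br J j)"
  using assms by (cases j) (auto simp: lie_ideal_def)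

lemma lc_dec:
  assumes "lie_ideal br J" shows "lower_central br J (Suc j) \<subseteq> lower_central br J j"
proof (induction j)
  case 0
  have "subspace J" "\<forall>x y. y \<in> J \<longrightarrow> br x y \<in> J" using assms by (auto simp: lie_ideal_def)
  then have "{br x y |x y. x \<in> J \<and> y \<in> J} \<subseteq> J" by auto
  then show ?case using span_minimal \<open>subspace J\<close> by simp
next
  case (Suc j)
  then show ?case by (auto intro!: span_mono)
qed

lemma lc_pres:
  assumes L: "lie_algebra br" and J: "lie_ideal br J"
  shows "z \<in> lower_central br J j \<Longrightarrow> br Y z \<in> lower_central br J j"
proof (induction j arbitrary: z Y)
  case 0
  then show ?case using J by (auto simp: lie_ideal_def)
next
  case (Suc j)
  have b: "bilinear br" using L by (simp add: lie_algebra_def)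
  define G where "G = {br x y | x y. x \<in> J \<and> y \<in> lower_central br J j}"
  have z: "z \<in> span G" using Suc.prems G_def by simp
  have "subspace {z. br Y z \<in> span G}"
    unfolding subspace_def
    by (auto simp: bilinear_rzero[OF b] bilinear_radd[OF b] bilinear_rmul[OF b]
        intro: span_add span_scale span_zero)
  moreover have "br Y w \<in> span G" if "w \<in> G" for w
  proof -
    obtain x y where w: "w = br x y" "x \<in> J" "y \<in> lower_central br J j" using \<open>w \<in> G\<close> G_def by auto
    have sj: "subspace (lower_central br J j)" using lc_subspace[OF J] .
    have "br Y y \<in> lower_central br J j" using Suc.IH w(3) .
    then have "br y Y \<in> lower_central br J j" using la_anti[OF L, of Y y] sj subspace_neg by fastforce
    then have g1: "br x (br y Y) \<in> G" using w G_def by auto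
    have "br Y x \<in> J" using J w(2) by (auto simp: lie_ideal_def)
    then have g2: "br (br Y x) y \<in> G" using w G_def by auto
    have "br Y (br x y) = - br x (br y Y) - br y (br Y x)"
      using la_jacobi[OF L, of Y x y] by (simp add: eq_neg_iff_add_eq_0 algebra_simps)
    also have "\<dots> = - br x (br y Y) + br (br Y x) y" using la_anti[OF L, of y "br Y x"] by simp
    finally show ?thesis using g1 g2 w(1)
      by (metis span_add span_base span_neg)
  qed
  ultimately show ?case using span_induct[OF z, of "\<lambda>z. br Y z \<in> span G"] G_def by auto
qed

lemma trace_nil:
  fixes br :: "'a::euclidean_space \<Rightarrow> 'a \<Rightarrow> 'a"
  assumes L: "lie_algebra br" and J: "nilpotent_ideal br J" and x: "x \<in> J"
  shows "(\<Sum>b\<in>Basis. br (br b x) Y \<bullet> b) = 0"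
proof -
  have b: "bilinear br" using L by (simp add: lie_algebra_def)
  have Ji: "lie_ideal br J" using J by (simp add: nilpotent_ideal_def)
  obtain k where k: "lower_central br J k = {0}" using J by (auto simp: nilpotent_ideal_def nilpotent_set_def)
  define F where "F j = (case j of 0 \<Rightarrow> UNIV | Suc i \<Rightarrow> lower_central br J i)" for j
  define T where "T b = br (br b x) Y" for b
  have lin: "linear T"
  proof -
    have "linear (\<lambda>b. br b x)" "linear (\<lambda>c. br c Y)" using b by (auto simp: bilinear_def)
    then show ?thesis unfolding T_def using linear_compose[of "\<lambda>b. br b x" "\<lambda>c. br c Y"]
      by (simp add: o_def)
  qed
  have sub: "subspace (F j)" for j by (cases j) (auto simp: F_def lc_subspace[OF Ji])
  have dec: "F (Suc j) \<subseteq> F j" for j by (cases j) (simp_all add: F_def lc_dec[OF Ji] del: lower_central.simps)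
  have pres: "w \<in> lower_central br J i \<Longrightarrow> br w Y \<in> lower_central br J i" for w i
    using lc_pres[OF L Ji, of w i Y] la_anti[OF L, of w Y] lc_subspace[OF Ji, of i]
    by (metis subspace_neg)
  have TF: "T ` F j \<subseteq> F (Suc j)" for j
  proof (cases j)
    case 0
    have "T w \<in> J" for w
    proof -
      have "br w x \<in> J" using Ji x by (auto simp: lie_ideal_def)
      then show ?thesis using pres[of "br w x" 0] by (simp add: T_def)
    qed
    then show ?thesis using 0 by (auto simp: F_def)
  next
    case (Suc i)
    have "T w \<in> lower_central br J (Suc i)" if w: "w \<in> lower_central br J i" for w
    proof -
      have "br x w \<in> lower_central br J (Suc i)" using w x by (auto intro: span_base)
      then have "br w x \<in> lower_central br J (Suc i)"
        using la_anti[OF L, of w x] lc_subspace[OF Ji, of "Suc i"] by (metis subspace_neg)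
      then show ?thesis using pres[of "br w x" "Suc i"] unfolding T_def by blast
    qed
    then show ?thesis using Suc by (auto simp: F_def)
  qed
  have "(\<Sum>b\<in>Basis. T b \<bullet> b) = 0"
    by (rule trace_flag[of T F "Suc k", OF lin sub dec]) (use TF k in \<open>simp_all add: F_def\<close>)
  then show ?thesis by (simp add: T_def)
qed


lemma metric_bil: "metric g \<Longrightarrow> bilinear g" by (simp add: metric_def)

lemma metric_unique:
  assumes "metric g" "\<forall>Z. g W Z = g W' Z" shows "W = W'"
proof -
  have "\<forall>Z. g (W - W') Z = 0" using assms bilinear_lsub[OF metric_bil[OF assms(1)]] by simp
  then have "W - W' = 0" using assms(1) unfolding metric_def by blast
  then show ?thesis by simp
qed

lemma riesz:
  fixes g :: "'a::euclidean_space \<Rightarrow> 'a \<Rightarrow> real"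
  assumes g: "metric g" and f: "linear f"
  shows "\<exists>W. \<forall>Z. g W Z = f Z"
proof -
  have b: "bilinear g" using g by (simp add: metric_def)
  define L where "L W = (\<Sum>b\<in>Basis. g W b *\<^sub>R b)" for W
  have coef: "L W \<bullet> c = g W c" if "c \<in> Basis" for W c
    unfolding L_def using that by (simp add: inner_sum_left inner_Basis if_distrib sum.delta cong: if_cong)
  have linL: "linear L"
    by (rule linearI) (simp_all add: L_def bilinear_ladd[OF b] bilinear_lmul[OF b] scaleR_add_left sum.distrib scaleR_sum_right)
  have zero: "W = 0" if "L W = 0" for W
  proof -
    have gb: "g W c = 0" if "c \<in> Basis" for c using coef[OF that, of W] \<open>L W = 0\<close> by simp
    have "linear (\<lambda>Z. g W Z)" "linear (\<lambda>Z. 0::real)" using b by (auto simp: bilinear_def linear_zero)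
    then have "(\<lambda>Z. g W Z) = (\<lambda>Z. 0)" using linear_eq_stdbasis gb by blast
    then show "W = 0" using g by (simp add: metric_def fun_eq_iff)
  qed
  have injL: "inj L"
  proof (rule injI)
    fix x y assume "L x = L y"
    then have "L (x - y) = 0" using linear_diff[OF linL] by simp
    then show "x = y" using zero by fastforce
  qed
  obtain W where W: "L W = (\<Sum>b\<in>Basis. f b *\<^sub>R b)"
    using linear_injective_imp_surjective[OF linL injL] by (metis surjD)
  have "g W c = f c" if "c \<in> Basis" for c
  proof -
    have "g W c = L W \<bullet> c" using coef[OF that] by simp
    also have "\<dots> = f c" using that by (simp add: W inner_sum_left inner_Basis if_distrib sum.delta cong: if_cong)
    finally show ?thesis .
  qed
  moreover have "linear (\<lambda>Z. g W Z)" using b by (simp add: bilinear_def)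
  ultimately have "(\<lambda>Z. g W Z) = f" using linear_eq_stdbasis[of "\<lambda>Z. g W Z" f] f by blast
  then show ?thesis by metis
qed


definition kos :: "('a::real_vector \<Rightarrow> 'a \<Rightarrow> real) \<Rightarrow> ('a \<Rightarrow> 'a \<Rightarrow> 'a) \<Rightarrow> 'a \<Rightarrow> 'a \<Rightarrow> 'a \<Rightarrow> real" where
  "kos g br X Y Z = g (br X Y) Z - g (br Y Z) X + g (br Z X) Y"

lemma kos_linear:
  assumes g: "bilinear g" and b: "bilinear br"
  shows "linear (\<lambda>Z. kos g br X Y Z / 2)"
  apply (rule linearI)
   apply (simp_all add: kos_def bilinear_radd[OF g] bilinear_ladd[OF g] bilinear_radd[OF b] bilinear_ladd[OF b]
      bilinear_rmul[OF g] bilinear_lmul[OF g] bilinear_rmul[OF b] bilinear_lmul[OF b])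
   apply (simp_all add: field_simps)
  done

lemma lc_char:
  fixes g :: "'a::euclidean_space \<Rightarrow> 'a \<Rightarrow> real"
  assumes g: "metric g" and b: "bilinear br"
  shows "2 * g (levi_civita g br X Y) Z = kos g br X Y Z"
proof -
  obtain W where W: "\<forall>Z. g W Z = kos g br X Y Z / 2"
    using riesz[OF g kos_linear[OF metric_bil[OF g] b]] by blast
  have ex: "\<exists>!W. \<forall>Z. 2 * g W Z = kos g br X Y Z"
  proof
    show "\<forall>Z. 2 * g W Z = kos g br X Y Z" using W by (simp add: mult.commute)
  next
    fix V assume "\<forall>Z. 2 * g V Z = kos g br X Y Z"
    then have "\<forall>Z. g V Z = g W Z" using W by (metis divide_eq_eq zero_neq_numeral mult.commute)
    then show "V = W" using metric_unique[OF g] by blast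
  qed
  have "\<forall>Z. 2 * g (levi_civita g br X Y) Z = kos g br X Y Z"
    unfolding levi_civita_def kos_def[symmetric] by (rule theI'[OF ex])
  then show ?thesis by blast
qed

lemma lc_eq:
  fixes g :: "'a::euclidean_space \<Rightarrow> 'a \<Rightarrow> real"
  assumes g: "metric g" and b: "bilinear br" and V: "\<And>Z. 2 * g V Z = kos g br X Y Z"
  shows "levi_civita g br X Y = V"
  using lc_char[OF g b] V metric_unique[OF g] by (metis mult_cancel_left zero_neq_numeral)

lemma lc_linear:
  fixes g :: "'a::euclidean_space \<Rightarrow> 'a \<Rightarrow> real"
  assumes g: "metric g" and b: "bilinear br"
  shows "linear (levi_civita g br X)"
proof (rule linearI)
  have gb: "bilinear g" using g by (simp add: metric_def)
  fix Y1 Y2 :: 'a and c :: real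
  show "levi_civita g br X (Y1 + Y2) = levi_civita g br X Y1 + levi_civita g br X Y2"
  proof (rule lc_eq[OF g b])
    fix Z
    show "2 * g (levi_civita g br X Y1 + levi_civita g br X Y2) Z = kos g br X (Y1 + Y2) Z"
      using lc_char[OF g b, of X Y1 Z] lc_char[OF g b, of X Y2 Z]
      by (simp add: kos_def bilinear_radd[OF gb] bilinear_ladd[OF gb] bilinear_radd[OF b] bilinear_ladd[OF b] algebra_simps)
  qed
  show "levi_civita g br X (c *\<^sub>R Y1) = c *\<^sub>R levi_civita g br X Y1"
  proof (rule lc_eq[OF g b])
    fix Z
    show "2 * g (c *\<^sub>R levi_civita g br X Y1) Z = kos g br X (c *\<^sub>R Y1) Z"
      using lc_char[OF g b, of X Y1 Z]
      by (simp add: kos_def bilinear_rmul[OF gb] bilinear_lmul[OF gb] bilinear_rmul[OF b] bilinear_lmul[OF b] algebra_simps)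
         (metis mult.left_commute ring_class.ring_distribs(1) ring_class.right_diff_distrib)
  qed
qed

lemma ric_op:
  fixes g :: "'a::euclidean_space \<Rightarrow> 'a \<Rightarrow> real"
  assumes g: "metric g" and b: "bilinear br"
  shows "g (ricci_operator g br Y) Z = ricci_tensor g br Y Z"
proof -
  have lin: "linear (ricci_tensor g br Y)"
  proof -
    have "linear (\<lambda>Z. curvature g br c Y Z)" for c
    proof -
      have l1: "linear (levi_civita g br U)" for U by (rule lc_linear[OF g b])
      have "linear (\<lambda>Z. levi_civita g br c (levi_civita g br Y Z))"
        using linear_compose[OF l1 l1] by (simp add: o_def)
      moreover have "linear (\<lambda>Z. levi_civita g br Y (levi_civita g br c Z))"
        using linear_compose[OF l1 l1] by (simp add: o_def)
      ultimately show ?thesis unfolding curvature_def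
        by (intro linear_compose_sub l1)
    qed
    then have "linear (\<lambda>Z. curvature g br c Y Z \<bullet> c)" for c
      by (simp add: linear_iff inner_add_left)
    then show ?thesis unfolding ricci_tensor_def[abs_def]
      by (intro linear_compose_sum) auto
  qed
  obtain W where W: "\<forall>Z. g W Z = ricci_tensor g br Y Z" using riesz[OF g lin] by blast
  have ex: "\<exists>!W. \<forall>Z. g W Z = ricci_tensor g br Y Z"
    using W metric_unique[OF g] by metis
  show ?thesis unfolding ricci_operator_def using theI'[OF ex] by blast
qed


theorem corollary3p11:
  fixes br :: "'a::euclidean_space \<Rightarrow> 'a \<Rightarrow> 'a"
    and g :: "'a \<Rightarrow> 'a \<Rightarrow> real"
    and n a :: "'a set" and lam :: real
  assumes "lie_algebra br" and "solvable_lie br" and "metric g"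
    and "\<forall>X. ricci_operator g br X = lam *\<^sub>R X" and "lam \<noteq> 0"
    and "pseudo_iwasawa g br n a"
  shows "is_nilradical br n"
proof -
  note L = assms(1) and g = assms(3) and P = assms(6)
  have b: "bilinear br" using L by (simp add: lie_algebra_def)
  have gb: "bilinear g" using g by (simp add: metric_def)
  have gsym: "g x y = g y x" for x y using g by (simp add: metric_def)
  have nI: "nilpotent_ideal br n" and nid: "lie_ideal br n" and ab: "abelian_set br a"
    and na: "n + a = UNIV" and orth: "\<And>x y. x \<in> n \<Longrightarrow> y \<in> a \<Longrightarrow> g x y = 0"
    and sa: "\<And>X Y Z. X \<in> a \<Longrightarrow> g (br X Y) Z = g Y (br X Z)"
    using P by (auto simp: pseudo_iwasawa_def nilpotent_ideal_def)
  have nsub: "subspace n" and nideal: "\<And>x y. y \<in> n \<Longrightarrow> br x y \<in> n"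
    using nid by (auto simp: lie_ideal_def)
  have dec: "\<exists>z1 z2. z1 \<in> n \<and> z2 \<in> a \<and> z = z1 + z2" for z
  proof -
    have "z \<in> n + a" using na by simp
    then show ?thesis by (auto elim!: set_plus_elim)
  qed
  have brn: "br Z W \<in> n" for Z W
  proof -
    obtain z1 z2 where z: "z1 \<in> n" "z2 \<in> a" "Z = z1 + z2" using dec by blast
    obtain w1 w2 where w: "w1 \<in> n" "w2 \<in> a" "W = w1 + w2" using dec by blast
    have "br Z W = br Z w1 + (- br w2 z1) + br z2 w2"
      using z w by (simp add: bilinear_radd[OF b] bilinear_ladd[OF b] la_anti[OF L, of z1 w2])
    moreover have "br z2 w2 = 0" using ab z w by (simp add: abelian_set_def)
    ultimately show ?thesis using nideal z w nsub
      by (metis add.right_neutral subspace_add subspace_neg)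
  qed
  have orth2: "g y x = 0" if "x \<in> n" "y \<in> a" for x y using orth[OF that] gsym by simp
  have nabla_a: "levi_civita g br X V = 0" if X: "X \<in> a" for X V
  proof (rule lc_eq[OF g b])
    fix Z
    have "g (br V Z) X = 0" using orth[OF brn X] .
    moreover have "g (br Z X) V = - g (br X V) Z"
      using sa[OF X, of Z V] la_anti[OF L, of Z X] bilinear_lneg[OF gb] gsym by metis
    ultimately show "2 * g 0 Z = kos g br X V Z" by (simp add: kos_def bilinear_lzero[OF gb])
  qed
  have nabla_Y: "levi_civita g br W Y = br W Y" if Y: "Y \<in> a" for W Y
  proof (rule lc_eq[OF g b])
    fix Z
    have "g (br Z W) Y = 0" using orth[OF brn Y] .
    moreover have "g (br Y Z) W = - g (br W Y) Z"
      using sa[OF Y, of Z W] la_anti[OF L, of Y W] bilinear_lneg[OF gb] gsym by metis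
    ultimately show "2 * g (br W Y) Z = kos g br W Y Z" by (simp add: kos_def)
  qed
  have nabla_0: "levi_civita g br W 0 = 0" for W using lc_linear[OF g b] linear_0 by blast
  have ric: "ricci_tensor g br X Y = - (\<Sum>c\<in>Basis. br (br c X) Y \<bullet> c)" if "X \<in> a" "Y \<in> a" for X Y
  proof -
    have "curvature g br c X Y = - br (br c X) Y" for c
      unfolding curvature_def using that by (simp add: nabla_a nabla_Y nabla_0)
    then show ?thesis by (simp add: ricci_tensor_def sum_negf)
  qed
  show ?thesis unfolding is_nilradical_def
  proof (intro conjI allI impI subsetI)
    show "nilpotent_ideal br n" by (rule nI)
  next
    fix I x assume I: "nilpotent_ideal br I" and x: "x \<in> I"
    obtain m X where mX: "m \<in> n" "X \<in> a" "x = m + X" using dec by blast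
    have gXY: "g X Y = 0" if Y: "Y \<in> a" for Y
    proof -
      have "(\<Sum>c\<in>Basis. br (br c X) Y \<bullet> c) =
            (\<Sum>c\<in>Basis. br (br c x) Y \<bullet> c) - (\<Sum>c\<in>Basis. br (br c m) Y \<bullet> c)"
        using mX by (simp add: bilinear_radd[OF b] bilinear_ladd[OF b] bilinear_rsub[OF b] bilinear_lsub[OF b]
            inner_diff_left sum_subtractf[symmetric] inner_add_left sum.distrib)
      also have "\<dots> = 0" using trace_nil[OF L I x] trace_nil[OF L nI mX(1)] by simp
      finally have "ricci_tensor g br X Y = 0" using ric[OF mX(2) Y] by simp
      then have "g (lam *\<^sub>R X) Y = 0" using ric_op[OF g b, of X Y] assms(4) by simp
      then show ?thesis using assms(5) by (simp add: bilinear_lmul[OF gb])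
    qed
    have "g X Z = 0" for Z
    proof -
      obtain z1 z2 where z: "z1 \<in> n" "z2 \<in> a" "Z = z1 + z2" using dec by blast
      then show ?thesis using gXY[OF z(2)] orth2[OF z(1) mX(2)] by (simp add: bilinear_radd[OF gb])
    qed
    then have "X = 0" using g by (simp add: metric_def)
    then show "x \<in> n" using mX by simp
  qed
qed

end
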